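(* Let $f\in\mathbb{Z}[[x]]$ with $f(0)=0$, $f'(0)\in\{1,-1\}$, let $\rho,\sigma,\pi\in\mathbb{Z}$, and set $$g(x)=\left(\frac{f(x)}{x}\right)^{\rho}\big(f'(x)\big)^{\sigma}\left(\frac{f(x)-1}{x-1}\right)^{\pi}.$$ Suppose the Riordan array $\upsilon_f[\rho,\sigma,\pi]=(g(x),f(x))$ is an involution. Then the almost Riordan array $$\left(\left(\frac{f(x)}{x}\right)^{\rho-1}\big(f'(x)\big)^{\sigma}\left(\frac{f(x)-1}{x-1}\right)^{\pi};\ g(x),\ f(x)\right)$$ is also an involution in the group of almost Riordan arrays of first order.
   Context: All matrices are infinite lower-triangular with rows and columns indexed by $n,k\ge0$. $[x^n]h(x)$ denotes the coefficient of $x^n$ in $h$. The Riordan array $(g,f)$ is the matrix with entries $[x^n]g(x)f(x)^k$; it is an involution if $(g,f)^2=(1,x)$, equivalently $g(x)g(f(x))=1$ and $f(f(x))=x$. An almost Riordan array of first order $(a;g,f)$ has associated matrix $M$ with $M_{0,0}=a_0$, $M_{0,k}=0$ for $k\ge1$, $M_{n,0}=a_n$ for $n\ge1$, and $M_{n,k}=[x^{n-1}]\,g(x)f(x)^{k-1}$ for $n,k\ge1$; it is an involution if $M^2=I$. *)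

theory Defs
  imports "HOL-Computational_Algebra.Formal_Power_Series"
begin

text \<open>Infinite lower-triangular matrices, indexed by n,k \<ge> 0, as functions.
  Product of lower-triangular matrices: (A B)_{n,k} = sum over j \<le> n of A_{n,j} B_{j,k}
  (the remaining terms vanish since A is lower triangular).\<close>

definition lt_mult :: "(nat \<Rightarrow> nat \<Rightarrow> 'a::comm_ring_1) \<Rightarrow> (nat \<Rightarrow> nat \<Rightarrow> 'a) \<Rightarrow> nat \<Rightarrow> nat \<Rightarrow> 'a" where
  "lt_mult A B = (\<lambda>n k. \<Sum>j\<le>n. A n j * B j k)"

definition lt_id :: "nat \<Rightarrow> nat \<Rightarrow> 'a::comm_ring_1" where
  "lt_id = (\<lambda>n k. if n = k then 1 else 0)"

definition riordan_matrix :: "'a::comm_ring_1 fps \<Rightarrow> 'a fps \<Rightarrow> nat \<Rightarrow> nat \<Rightarrow> 'a" where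
  "riordan_matrix g f = (\<lambda>n k. fps_nth (g * f ^ k) n)"

definition almost_riordan_matrix :: "'a::comm_ring_1 fps \<Rightarrow> 'a fps \<Rightarrow> 'a fps \<Rightarrow> nat \<Rightarrow> nat \<Rightarrow> 'a" where
  "almost_riordan_matrix a g f = (\<lambda>n k.
     if k = 0 then fps_nth a n
     else if n = 0 then 0
     else fps_nth (g * f ^ (k - 1)) (n - 1))"

definition is_involution :: "(nat \<Rightarrow> nat \<Rightarrow> 'a::comm_ring_1) \<Rightarrow> bool" where
  "is_involution M \<longleftrightarrow> lt_mult M M = lt_id"

end

theory Submission
  imports Defs
begin

unbundle fps_syntax

lemma key:
  fixes f g h :: "'a::comm_ring_1 fps"
  assumes f0: "f$0 = 0"
  shows "(\<Sum>j\<le>n. (g*f^j)$n * h$j) = (g*(h oo f))$n"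
proof -
  have z: "(f^j)$m = 0" if "m < j" for j m using startsby_zero_power_prefix[OF f0] that by blast
  have "(g*(h oo f))$n = (\<Sum>i=0..n. g$i * (\<Sum>j=0..n-i. h$j * (f^j)$(n-i)))"
    by (simp add: fps_mult_nth fps_compose_nth)
  also have "\<dots> = (\<Sum>i=0..n. \<Sum>j=0..n. g$i * h$j * (f^j)$(n-i))"
  proof (rule sum.cong[OF refl])
    fix i assume i: "i \<in> {0..n}"
    have "(\<Sum>j=0..n-i. h$j * (f^j)$(n-i)) = (\<Sum>j=0..n. h$j * (f^j)$(n-i))"
      by (rule sum.mono_neutral_left) (auto simp: z)
    thus "g$i * (\<Sum>j=0..n-i. h$j * (f^j)$(n-i)) = (\<Sum>j=0..n. g$i * h$j * (f^j)$(n-i))"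
      by (simp add: sum_distrib_left mult.assoc)
  qed
  also have "\<dots> = (\<Sum>j=0..n. \<Sum>i=0..n. g$i * h$j * (f^j)$(n-i))"
    by (rule sum.swap)
  also have "\<dots> = (\<Sum>j\<le>n. (g*f^j)$n * h$j)"
    unfolding atLeast0AtMost fps_mult_nth sum_distrib_right by (intro sum.cong refl) (simp add: ac_simps)
  finally show ?thesis ..
qed

lemma lt_mult_riordan:
  fixes f g :: "'a::idom fps"
  assumes f0: "f$0 = 0"
  shows "lt_mult (riordan_matrix g f) (riordan_matrix g f) n k = (g * (g oo f) * (f oo f)^k)$n"
  unfolding lt_mult_def riordan_matrix_def
  by (simp add: key[OF f0] fps_compose_mult_distrib[OF f0] fps_compose_power[OF f0] mult.assoc)

lemma invol_imp:
  fixes f g :: "'a::idom fps"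
  assumes f0: "f$0 = 0" and inv: "is_involution (riordan_matrix g f)"
  shows "g * (g oo f) * (f oo f)^k = fps_X^k"
proof (rule fps_ext)
  fix n
  from inv have "lt_mult (riordan_matrix g f) (riordan_matrix g f) n k = lt_id n k"
    by (simp add: is_involution_def)
  then show "(g * (g oo f) * (f oo f)^k) $ n = (fps_X^k) $ n"
    by (simp add: lt_mult_riordan[OF f0] lt_id_def)
qed

lemma invol_intro:
  fixes f g :: "'a::idom fps"
  assumes f0: "f$0 = 0" and h: "\<And>k. g * (g oo f) * (f oo f)^k = fps_X^k"
  shows "is_involution (riordan_matrix g f)"
  unfolding is_involution_def
proof (intro ext)
  fix n k
  show "lt_mult (riordan_matrix g f) (riordan_matrix g f) n k = lt_id n k"
    by (simp add: lt_mult_riordan[OF f0] lt_id_def h)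
qed

lemma powi_succ:
  fixes u :: "'a::field fps"
  assumes "u$0 \<noteq> 0"
  shows "u powi (m+1) = u powi m * u"
proof (cases "m \<ge> 0")
  case True
  then have "nat (m+1) = Suc (nat m)" by simp
  then show ?thesis using True by (simp add: power_int_def mult.commute)
next
  case False
  define n where "n = nat (-m) - 1"
  have n: "m = - int (Suc n)" using False unfolding n_def by simp
  have "nat (- m) = Suc n" "nat (-(m+1)) = n" using n by simp_all
  moreover have "inverse u * u = 1" using assms by (rule inverse_mult_eq_1)
  ultimately show ?thesis using n False
    by (simp add: power_int_def fps_inverse_mult mult.assoc)
qed

theorem mainTheorem11:
  fixes f :: "rat fps" and \<rho> \<sigma> \<pi> :: int
  assumes int_coeffs: "\<forall>n. fps_nth f n \<in> \<int>"
    and f0: "fps_nth f 0 = 0"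
    and f'0: "fps_nth (fps_deriv f) 0 \<in> {1, -1}"
    and inv: "is_involution (riordan_matrix
                 ((f / fps_X) powi \<rho> * (fps_deriv f) powi \<sigma>
                    * ((f - 1) / (fps_X - 1)) powi \<pi>) f)"
  shows "is_involution (almost_riordan_matrix
            ((f / fps_X) powi (\<rho> - 1) * (fps_deriv f) powi \<sigma>
               * ((f - 1) / (fps_X - 1)) powi \<pi>)
            ((f / fps_X) powi \<rho> * (fps_deriv f) powi \<sigma>
               * ((f - 1) / (fps_X - 1)) powi \<pi>)
            f)"
proof -
  define u where "u = f / fps_X"
  define A where "A = (fps_deriv f) powi \<sigma>"
  define B where "B = ((f - 1) / (fps_X - 1)) powi \<pi>"
  define a where "a = u powi (\<rho> - 1) * A * B"
  define g where "g = u powi \<rho> * A * B"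
  have f1: "f $ 1 \<noteq> 0" using f'0 by (auto simp: fps_deriv_nth)
  have u0: "u $ 0 \<noteq> 0" using f1 by (simp add: u_def)
  have Xu: "fps_X * u = f"
    by (rule fps_ext) (simp add: u_def f0)
  have "u powi \<rho> = u powi (\<rho> - 1) * u"
    using powi_succ[OF u0, of "\<rho> - 1"] by simp
  hence Xg: "fps_X * g = a * f"
    unfolding g_def a_def by (simp add: Xu[symmetric] ac_simps)
  have inv': "is_involution (riordan_matrix g f)" using inv
    by (simp add: g_def u_def A_def B_def)
  have G1: "g * (g oo f) = 1" using invol_imp[OF f0 inv', of 0] by simp
  have FF: "f oo f = fps_X" using invol_imp[OF f0 inv', of 1] G1 by simp
  have "(fps_X * g) oo f = (a * f) oo f" using Xg by simp
  hence C: "f * (g oo f) = (a oo f) * fps_X"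
    by (simp add: fps_compose_mult_distrib[OF f0] FF f0)
  have "fps_X * f * (a * (a oo f)) = (a * f) * ((a oo f) * fps_X)" by (simp add: ac_simps)
  also have "\<dots> = (fps_X * g) * (f * (g oo f))" using Xg C by simp
  also have "\<dots> = fps_X * f * (g * (g oo f))" by (simp add: ac_simps)
  also have "\<dots> = fps_X * f * 1" using G1 by simp
  finally have E: "fps_X * f * (a * (a oo f)) = fps_X * f * 1" .
  have fnz: "f \<noteq> 0" using f1 by auto
  have A1: "a * (a oo f) = 1"
    using E fnz by (simp only: mult_cancel_left) simp
  have invA: "is_involution (riordan_matrix a f)"
    by (rule invol_intro[OF f0]) (simp add: A1 FF)
  have M: "almost_riordan_matrix a g f = riordan_matrix a f"
  proof (intro ext)
    fix n k
    show "almost_riordan_matrix a g f n k = riordan_matrix a f n k"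
    proof (cases "k = 0")
      case True thus ?thesis by (simp add: almost_riordan_matrix_def riordan_matrix_def)
    next
      case False
      then obtain k' where k: "k = Suc k'" by (cases k) auto
      show ?thesis
      proof (cases n)
        case 0 thus ?thesis using k f0 by (simp add: almost_riordan_matrix_def riordan_matrix_def)
      next
        case (Suc n')
        have "(a * f ^ k) $ n = (fps_X * g * f ^ k') $ n" using Xg k by (simp add: ac_simps)
        also have "\<dots> = (g * f ^ k') $ n'" using Suc by (simp add: mult.assoc)
        finally show ?thesis using k Suc by (simp add: almost_riordan_matrix_def riordan_matrix_def)
      qed
    qed
  qed
  show ?thesis using invA M
    by (simp add: a_def g_def u_def A_def B_def)
qed

end
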